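(* Let $P=(p_1,\dots,p_n)$ be points in $\mathbb{R}^d$, $k\ge1$, and $\mathcal{F}$ a constraint for $k$-CMedian. Let $\lambda\ge1$ and let $\mathcal{C}=\{c_1,\dots,c_k\}$ be the centers (median points) of a $\lambda$-approximate solution of the ordinary (unconstrained) $k$-median problem on $P$. Then $[\mathcal{C}]^k=\mathcal{C}\times\cdots\times\mathcal{C}$ contains a $k$-tuple $(q_1,\dots,q_k)$ for which some $(S_1,\dots,S_k)\in\mathcal{F}$ satisfies $\frac1n\sum_{j=1}^k\sum_{i\in S_j}\|p_i-q_j\|\le(3\lambda+2)\mu_{opt}$.
   Context: A constraint for $k$-CMedian is a nonempty family $\mathcal{F}$ of ordered partitions $(S_1,\dots,S_k)$ of $\{1,\dots,n\}$ into $k$ parts; $\mu_{opt}=\min_{(S_j)\in\mathcal{F}}\min_{c'_1,\dots,c'_k\in\mathbb{R}^d}\frac1n\sum_j\sum_{i\in S_j}\|p_i-c'_j\|$. The unconstrained $k$-median cost of a $k$-point set $\mathcal{C}$ is $\omega=\frac1n\sum_i\min_{c\in\mathcal{C}}\|p_i-c\|$, and $\mathcal{C}$ is $\lambda$-approximate if $\omega$ is at most $\lambda$ times the minimum of this cost over all $k$-point sets. *)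

theory Defs
  imports "HOL-Analysis.Analysis"
begin

text \<open>Points are p 1, ..., p n in R^d (index type 'd). An ordered partition
  (S_1,...,S_k) of {1..n} is a function S :: nat => nat set, only its values
  on {1..k} being relevant.\<close>

definition ordered_partition :: "nat \<Rightarrow> nat \<Rightarrow> (nat \<Rightarrow> nat set) \<Rightarrow> bool" where
  "ordered_partition n k S \<longleftrightarrow>
     (\<forall>j\<in>{1..k}. S j \<subseteq> {1..n}) \<and> (\<forall>i\<in>{1..n}. \<exists>!j. j \<in> {1..k} \<and> i \<in> S j)"

definition is_constraint :: "nat \<Rightarrow> nat \<Rightarrow> (nat \<Rightarrow> nat set) set \<Rightarrow> bool" where
  "is_constraint n k F \<longleftrightarrow> F \<noteq> {} \<and> (\<forall>S\<in>F. ordered_partition n k S)"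

definition cmed_cost :: "(nat \<Rightarrow> real^'d) \<Rightarrow> nat \<Rightarrow> nat \<Rightarrow> (nat \<Rightarrow> nat set) \<Rightarrow> (nat \<Rightarrow> real^'d) \<Rightarrow> real" where
  "cmed_cost p n k S c = (1 / real n) * (\<Sum>j=1..k. \<Sum>i\<in>S j. norm (p i - c j))"

definition mu_opt :: "(nat \<Rightarrow> real^'d) \<Rightarrow> nat \<Rightarrow> nat \<Rightarrow> (nat \<Rightarrow> nat set) set \<Rightarrow> real" where
  "mu_opt p n k F = Inf {cmed_cost p n k S c | S c. S \<in> F}"

definition kmed_cost :: "(nat \<Rightarrow> real^'d) \<Rightarrow> nat \<Rightarrow> (real^'d) set \<Rightarrow> real" where
  "kmed_cost p n C = (1 / real n) * (\<Sum>i=1..n. Min ((\<lambda>c. norm (p i - c)) ` C))"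

definition approx_kmedian :: "(nat \<Rightarrow> real^'d) \<Rightarrow> nat \<Rightarrow> nat \<Rightarrow> real \<Rightarrow> (real^'d) set \<Rightarrow> bool" where
  "approx_kmedian p n k lam C \<longleftrightarrow>
     finite C \<and> card C = k \<and>
     kmed_cost p n C \<le> lam * Inf {kmed_cost p n D | D. finite D \<and> card D = k}"

end

theory Submission
  imports Defs "HOL-Library.FuncSet"
begin

lemma part_sum:
  assumes "ordered_partition n k S"
  shows "(\<Sum>j=1..k. \<Sum>i\<in>S j. f i) = (\<Sum>i=1..n. (f i :: real))"
proof -
  have sub: "\<forall>j\<in>{1..k}. S j \<subseteq> {1..n}" and u: "\<forall>i\<in>{1..n}. \<exists>!j. j \<in> {1..k} \<and> i \<in> S j"
    using assms unfolding ordered_partition_def by auto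
  have fin: "\<forall>j\<in>{1..k}. finite (S j)" using sub finite_subset by blast
  have disj: "\<forall>a\<in>{1..k}. \<forall>b\<in>{1..k}. a \<noteq> b \<longrightarrow> S a \<inter> S b = {}"
    using sub u by blast
  have U: "\<Union>(S ` {1..k}) = {1..n}" using sub u by blast
  show ?thesis
    using sum.UNION_disjoint[OF _ fin disj, of f] U by simp
qed

lemma nearest:
  assumes "finite C" "C \<noteq> {}"
  shows "\<exists>a\<in>C. norm (x - a) = Min ((\<lambda>c. norm (x - c)) ` C) \<and> (\<forall>c\<in>C. norm (x - a) \<le> norm ((x::real^'d) - c))"
proof -
  have "Min ((\<lambda>c. norm (x - c)) ` C) \<in> (\<lambda>c. norm (x - c)) ` C"
    using assms by (intro Min_in) auto
  then obtain a where "a \<in> C" "norm (x - a) = Min ((\<lambda>c. norm (x - c)) ` C)" by auto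
  moreover have "\<forall>c\<in>C. Min ((\<lambda>c. norm (x - c)) ` C) \<le> norm (x - c)"
    using assms by auto
  ultimately show ?thesis by auto
qed

lemma kmed_nonneg': "finite D \<Longrightarrow> D \<noteq> {} \<Longrightarrow> kmed_cost p n D \<ge> 0"
  unfolding kmed_cost_def
proof (intro mult_nonneg_nonneg sum_nonneg)
  fix i assume "finite D" "D \<noteq> {}"
  then show "0 \<le> Min ((\<lambda>c. norm (p i - c)) ` D)" by (simp add: Min_ge_iff)
qed simp

lemma cost_nonneg: "cmed_cost p n k S c \<ge> 0"
  unfolding cmed_cost_def by (intro mult_nonneg_nonneg sum_nonneg) auto

lemma exists_superset:
  fixes A :: "(real^'d) set"
  assumes "finite A" "card A \<le> k"
  shows "\<exists>D. finite D \<and> card D = k \<and> A \<subseteq> D"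
proof -
  have "infinite (UNIV :: (real^'d) set)"
    by (rule infinite_UNIV_vec) (rule infinite_UNIV_char_0)
  then have "infinite (UNIV - A)" using assms(1) by auto
  then obtain B where B: "finite B" "card B = k - card A" "B \<subseteq> UNIV - A"
    using infinite_arbitrarily_large by blast
  then have "card (A \<union> B) = card A + card B" using assms(1)
    by (intro card_Un_disjoint) auto
  then show ?thesis using B assms by (intro exI[of _ "A \<union> B"]) auto
qed

lemma key:
  fixes p :: "nat \<Rightarrow> real^'d"
  assumes k: "k \<ge> 1" and S: "ordered_partition n k S" and lam: "lam \<ge> 1"
    and ap: "approx_kmedian p n k lam C"
  shows "\<exists>q. (\<forall>j\<in>{1..k}. q j \<in> C) \<and> cmed_cost p n k S q \<le> (lam + 2) * cmed_cost p n k S c"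
proof -
  have finC: "finite C" and cardC: "card C = k"
    and apc: "kmed_cost p n C \<le> lam * Inf {kmed_cost p n D | D. finite D \<and> card D = k}"
    using ap unfolding approx_kmedian_def by auto
  have Cne: "C \<noteq> {}" using cardC k by auto
  define M where "M x = Min ((\<lambda>c. norm (x - c)) ` C)" for x
  have nr: "\<exists>a\<in>C. norm (x - a) = M x \<and> (\<forall>c\<in>C. norm (x - a) \<le> norm (x - c))" for x
    using nearest[OF finC Cne] unfolding M_def by blast
  define q where "q j = (SOME a. a \<in> C \<and> (\<forall>b\<in>C. norm (c j - a) \<le> norm (c j - b)))" for j
  have q: "q j \<in> C \<and> (\<forall>a\<in>C. norm (c j - q j) \<le> norm (c j - a))" for j
  proof -
    from nr[of "c j"] have "\<exists>a. a \<in> C \<and> (\<forall>b\<in>C. norm (c j - a) \<le> norm (c j - b))" by blast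
    then show ?thesis unfolding q_def by (rule someI_ex)
  qed
  have sub: "\<forall>j\<in>{1..k}. S j \<subseteq> {1..n}"
    using S unfolding ordered_partition_def by auto
  have pt: "norm (p i - q j) \<le> 2 * norm (p i - c j) + M (p i)" for i j
  proof -
    obtain a where a: "a \<in> C" "norm (p i - a) = M (p i)" using nr by blast
    have "norm (c j - q j) \<le> norm (c j - a)" using q a by blast
    also have "\<dots> \<le> norm (c j - p i) + norm (p i - a)"
      using norm_triangle_ineq[of "c j - p i" "p i - a"] by simp
    finally have "norm (c j - q j) \<le> norm (p i - c j) + M (p i)" using a by (simp add: norm_minus_commute)
    moreover have "norm (p i - q j) \<le> norm (p i - c j) + norm (c j - q j)"
      using norm_triangle_ineq[of "p i - c j" "c j - q j"] by simp
    ultimately show ?thesis by simp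
  qed
  have s1: "(\<Sum>j=1..k. \<Sum>i\<in>S j. norm (p i - q j)) \<le>
      (\<Sum>j=1..k. \<Sum>i\<in>S j. 2 * norm (p i - c j) + M (p i))"
    by (intro sum_mono pt)
  also have "\<dots> = 2 * (\<Sum>j=1..k. \<Sum>i\<in>S j. norm (p i - c j)) + (\<Sum>i=1..n. M (p i))"
    using part_sum[OF S, of "\<lambda>i. M (p i)"] by (simp add: sum.distrib sum_distrib_left)
  finally have s1': "cmed_cost p n k S q \<le> 2 * cmed_cost p n k S c + kmed_cost p n C"
    unfolding cmed_cost_def kmed_cost_def M_def
    by (simp add: divide_right_mono add_divide_distrib[symmetric])
  obtain D where D: "finite D" "card D = k" "c ` {1..k} \<subseteq> D"
    using exists_superset[of "c ` {1..k}" k] card_image_le[of "{1..k}" c] by auto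
  have Dne: "D \<noteq> {}" using D k by auto
  have "(\<Sum>i=1..n. Min ((\<lambda>x. norm (p i - x)) ` D)) =
        (\<Sum>j=1..k. \<Sum>i\<in>S j. Min ((\<lambda>x. norm (p i - x)) ` D))"
    by (rule part_sum[OF S, symmetric])
  also have "\<dots> \<le> (\<Sum>j=1..k. \<Sum>i\<in>S j. norm (p i - c j))"
  proof (intro sum_mono)
    fix j i assume "j \<in> {1..k}" "i \<in> S j"
    then have "c j \<in> D" using D by auto
    then show "Min ((\<lambda>x. norm (p i - x)) ` D) \<le> norm (p i - c j)"
      using D(1) by (intro Min_le) auto
  qed
  finally have kD: "kmed_cost p n D \<le> cmed_cost p n k S c"
    unfolding cmed_cost_def kmed_cost_def by (simp add: divide_right_mono)
  have "Inf {kmed_cost p n D | D. finite D \<and> card D = k} \<le> kmed_cost p n D"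
  proof (rule cInf_lower)
    show "kmed_cost p n D \<in> {kmed_cost p n D | D. finite D \<and> card D = k}" using D by auto
    show "bdd_below {kmed_cost p n D | D. finite D \<and> card D = k}"
    proof (rule bdd_belowI[of _ 0])
      fix x assume "x \<in> {kmed_cost p n D | D. finite D \<and> card D = k}"
      then obtain E where "x = kmed_cost p n E" "finite E" "card E = k" by auto
      then show "0 \<le> x" using k kmed_nonneg'[of E p n] by (metis card.empty not_one_le_zero)
    qed
  qed
  then have "kmed_cost p n C \<le> lam * kmed_cost p n D"
    using apc lam by (smt (verit) mult_left_mono)
  then have "kmed_cost p n C \<le> lam * cmed_cost p n k S c"
    using kD lam by (smt (verit) mult_left_mono)
  then show ?thesis using s1' q by (intro exI[of _ q]) (auto simp: algebra_simps)
qed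

theorem theorem11:
  fixes p :: "nat \<Rightarrow> real^'d" and n k :: nat and F :: "(nat \<Rightarrow> nat set) set"
    and lam :: real and C :: "(real^'d) set"
  assumes "k \<ge> 1"
    and "is_constraint n k F"
    and "lam \<ge> 1"
    and "approx_kmedian p n k lam C"
  shows "\<exists>q :: nat \<Rightarrow> real^'d. (\<forall>j\<in>{1..k}. q j \<in> C) \<and>
           (\<exists>S\<in>F. cmed_cost p n k S q \<le> (3 * lam + 2) * mu_opt p n k F)"
proof -
  have F: "F \<noteq> {}" "\<forall>S\<in>F. ordered_partition n k S"
    using assms(2) unfolding is_constraint_def by auto
  define V where "V = {cmed_cost p n k S q | S q. S \<in> F \<and> (\<forall>j\<in>{1..k}. q j \<in> C)}"
  have finC: "finite C" and cardC: "card C = k" using assms(4) unfolding approx_kmedian_def by auto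
  have Cne: "C \<noteq> {}" using cardC assms(1) by auto
  have restr: "cmed_cost p n k S q = cmed_cost p n k (restrict S {1..k}) (restrict q {1..k})" for S q
    unfolding cmed_cost_def by (intro arg_cong[where f="\<lambda>x. _ * x"] sum.cong) auto
  have "V \<subseteq> (\<lambda>(T, r). cmed_cost p n k T r) ` (({1..k} \<rightarrow>\<^sub>E Pow {1..n}) \<times> ({1..k} \<rightarrow>\<^sub>E C))"
  proof
    fix v assume "v \<in> V"
    then obtain S q where v: "v = cmed_cost p n k S q" "S \<in> F" "\<forall>j\<in>{1..k}. q j \<in> C"
      unfolding V_def by auto
    have "\<forall>j\<in>{1..k}. S j \<subseteq> {1..n}" using F v unfolding ordered_partition_def by auto
    then have mem: "(restrict S {1..k}, restrict q {1..k}) \<in> ({1..k} \<rightarrow>\<^sub>E Pow {1..n}) \<times> ({1..k} \<rightarrow>\<^sub>E C)"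
      using v by auto
    show "v \<in> (\<lambda>(T, r). cmed_cost p n k T r) ` (({1..k} \<rightarrow>\<^sub>E Pow {1..n}) \<times> ({1..k} \<rightarrow>\<^sub>E C))"
    proof (rule image_eqI[where x="(restrict S {1..k}, restrict q {1..k})"])
      show "v = (\<lambda>(T, r). cmed_cost p n k T r) (restrict S {1..k}, restrict q {1..k})"
        using v(1) restr by simp
    qed (rule mem)
  qed
  then have finV: "finite V"
    by (rule finite_subset) (intro finite_imageI finite_cartesian_product finite_PiE finC, auto)
  obtain S0 where S0: "S0 \<in> F" using F by auto
  obtain c0 where "c0 \<in> C" using Cne by auto
  then have "cmed_cost p n k S0 (\<lambda>_. c0) \<in> V" unfolding V_def using S0 by auto
  then have Vne: "V \<noteq> {}" by auto
  define m where "m = Min V"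
  have "m \<in> V" unfolding m_def using finV Vne by (rule Min_in)
  then obtain S q where Sq: "m = cmed_cost p n k S q" "S \<in> F" "\<forall>j\<in>{1..k}. q j \<in> C"
    unfolding V_def by auto
  let ?M = "{cmed_cost p n k S c | S c. S \<in> F}"
  have Mne: "?M \<noteq> {}" using S0 by auto
  have lb: "m / (lam + 2) \<le> x" if "x \<in> ?M" for x
  proof -
    from that obtain S' c where x: "x = cmed_cost p n k S' c" "S' \<in> F" by auto
    obtain q' where q': "\<forall>j\<in>{1..k}. q' j \<in> C" "cmed_cost p n k S' q' \<le> (lam + 2) * x"
      using key[OF assms(1) _ assms(3) assms(4), of S' c] F x by auto
    have "cmed_cost p n k S' q' \<in> V" unfolding V_def using q' x by auto
    then have "m \<le> cmed_cost p n k S' q'" unfolding m_def using finV by simp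
    then show ?thesis using q' assms(3) by (simp add: divide_le_eq mult.commute)
  qed
  have "m / (lam + 2) \<le> mu_opt p n k F"
    unfolding mu_opt_def by (rule cInf_greatest[OF Mne]) (use lb in blast)
  then have m1: "m \<le> (lam + 2) * mu_opt p n k F" using assms(3) by (simp add: divide_le_eq mult.commute)
  have "0 \<le> mu_opt p n k F"
    unfolding mu_opt_def by (rule cInf_greatest[OF Mne]) (auto simp: cost_nonneg)
  then have "m \<le> (3 * lam + 2) * mu_opt p n k F" using m1 assms(3)
    by (smt (verit) mult_right_mono)
  then show ?thesis using Sq by blast
qed

end
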